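(* Let $y_1,\dots,y_n\in\mathbb{C}^m$ be given vectors, not all zero, and let $\mathcal{T}$ denote the set of $m\times m$ Hermitian Toeplitz matrices (more generally, $\mathcal{T}$ may be any closed cone of Hermitian $m\times m$ matrices). Consider $$(P_1):\quad \min_{R\in\mathcal{T},\,R\succ 0}\ \frac1n\sum_{i=1}^n y_i^H R^{-1}y_i+\log\det R,$$ $$(P_2):\quad \min_{X\in\mathcal{T},\,X\succ 0}\ \log\det X\quad\text{subject to}\quad \frac1n\sum_{i=1}^n y_i^H X^{-1}y_i\le 1.$$ Then the two problems are equivalent in the following sense: if $X^*$ is a minimizer of $(P_2)$, then $R^*=X^*/m$ is a minimizer of $(P_1)$; and conversely, if $R^*$ is a minimizer of $(P_1)$, then $mR^*$ is a minimizer of $(P_2)$.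
   Context: $R\succ 0$ means $R$ is Hermitian positive definite; $\det$ denotes the determinant and $y^H$ the conjugate transpose. *)

theory Defs
  imports "HOL-Analysis.Analysis"
begin

text \<open>Complex m x m matrices are rendered as complex^'m^'m, with m = CARD('m).\<close>

definition conj_transpose :: "complex^'m^'n \<Rightarrow> complex^'n^'m" where
  "conj_transpose A = (\<chi> i j. cnj (A $ j $ i))"

definition hermitian :: "complex^'m^'m \<Rightarrow> bool" where
  "hermitian A \<longleftrightarrow> conj_transpose A = A"

definition qform :: "complex^'m \<Rightarrow> complex^'m^'m \<Rightarrow> complex" where
  "qform x A = (\<Sum>i\<in>UNIV. \<Sum>j\<in>UNIV. cnj (x $ i) * A $ i $ j * x $ j)"

definition pos_def :: "complex^'m^'m \<Rightarrow> bool" where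
  "pos_def A \<longleftrightarrow> hermitian A \<and>
     (\<forall>x. x \<noteq> 0 \<longrightarrow> Im (qform x A) = 0 \<and> Re (qform x A) > 0)"

text \<open>Objective of (P1): (1/n) sum_i y_i^H R^{-1} y_i + log det R.
  For R \<succ> 0 these quantities are real; we take real parts.\<close>
definition P1_obj :: "nat \<Rightarrow> (nat \<Rightarrow> complex^'m) \<Rightarrow> complex^'m^'m \<Rightarrow> real" where
  "P1_obj n y R = (1 / real n) * (\<Sum>i<n. Re (qform (y i) (matrix_inv R))) + ln (Re (det R))"

definition P2_con :: "nat \<Rightarrow> (nat \<Rightarrow> complex^'m) \<Rightarrow> complex^'m^'m \<Rightarrow> real" where
  "P2_con n y X = (1 / real n) * (\<Sum>i<n. Re (qform (y i) (matrix_inv X)))"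

definition P2_obj :: "complex^'m^'m \<Rightarrow> real" where
  "P2_obj X = ln (Re (det X))"

definition is_min_P1 :: "(complex^'m^'m) set \<Rightarrow> nat \<Rightarrow> (nat \<Rightarrow> complex^'m) \<Rightarrow> complex^'m^'m \<Rightarrow> bool" where
  "is_min_P1 T n y R \<longleftrightarrow> R \<in> T \<and> pos_def R \<and>
     (\<forall>R'\<in>T. pos_def R' \<longrightarrow> P1_obj n y R \<le> P1_obj n y R')"

definition is_min_P2 :: "(complex^'m^'m) set \<Rightarrow> nat \<Rightarrow> (nat \<Rightarrow> complex^'m) \<Rightarrow> complex^'m^'m \<Rightarrow> bool" where
  "is_min_P2 T n y X \<longleftrightarrow> X \<in> T \<and> pos_def X \<and> P2_con n y X \<le> 1 \<and>
     (\<forall>X'\<in>T. pos_def X' \<longrightarrow> P2_con n y X' \<le> 1 \<longrightarrow> P2_obj X \<le> P2_obj X')"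

end

theory Submission
  imports Defs
begin

lemma sr: "c *\<^sub>R (z::complex) = complex_of_real c * z"
  by (simp add: scaleR_conv_of_real)

lemma qform_scale: "qform x (c *\<^sub>R A) = complex_of_real c * qform x A"
  unfolding qform_def by (simp add: sum_distrib_left sr algebra_simps)

lemma qform_add: "qform x (A + B) = qform x A + qform x B"
  unfolding qform_def by (simp add: algebra_simps sum.distrib)

lemma qform_mv: "qform x A = (\<Sum>i\<in>UNIV. cnj (x$i) * (A *v x)$i)"
  unfolding qform_def matrix_vector_mult_def by (simp add: sum_distrib_left mult.assoc)

lemma qform_id: "qform x (mat 1) = (\<Sum>i\<in>UNIV. complex_of_real ((cmod (x$i))^2))"
proof -
  have "(\<Sum>j\<in>UNIV. cnj (x $ i) * (mat 1 :: complex^'a^'a) $ i $ j * x $ j) = complex_of_real ((cmod (x$i))^2)" for i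
  proof -
    have "(\<Sum>j\<in>UNIV. cnj (x $ i) * (mat 1 :: complex^'a^'a) $ i $ j * x $ j)
       = (\<Sum>j\<in>UNIV. if j = i then cnj (x $ i) * x $ i else 0)"
      by (rule sum.cong) (auto simp: mat_def)
    also have "\<dots> = cnj (x $ i) * x $ i" by simp
    also have "\<dots> = complex_of_real ((cmod (x$i))^2)" by (metis complex_norm_square mult.commute of_real_power)
    finally show ?thesis .
  qed
  thus ?thesis unfolding qform_def by simp
qed

lemma qform_id_pos: "x \<noteq> 0 \<Longrightarrow> Re (qform x (mat 1)) > 0 \<and> Im (qform x (mat 1)) = 0"
proof -
  assume "x \<noteq> 0"
  then obtain i where "x $ i \<noteq> 0" by (auto simp: vec_eq_iff)
  hence "(\<Sum>i\<in>UNIV. (cmod (x$i))^2) > 0"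
    by (intro sum_pos2[of UNIV i]) auto
  thus ?thesis unfolding qform_id by (simp add: Re_sum Im_sum)
qed

lemma hermitian_iff: "hermitian A \<longleftrightarrow> (\<forall>i j. cnj (A$j$i) = A$i$j)"
  unfolding hermitian_def conj_transpose_def vec_eq_iff by auto

lemma pos_def_scale:
  assumes "pos_def A" "c > 0" shows "pos_def (c *\<^sub>R A)"
  using assms unfolding pos_def_def
  by (auto simp: hermitian_iff qform_scale sr)

lemma pos_def_combo:
  assumes "pos_def A" "0 \<le> t" "t \<le> 1"
  shows "pos_def ((1 - t) *\<^sub>R mat 1 + t *\<^sub>R A)"
proof -
  have h: "hermitian A" using assms unfolding pos_def_def by auto
  have "hermitian ((1 - t) *\<^sub>R mat 1 + t *\<^sub>R A)"
    using h unfolding hermitian_iff by (auto simp: mat_def sr)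
  moreover have "Im (qform x ((1 - t) *\<^sub>R mat 1 + t *\<^sub>R A)) = 0 \<and>
      Re (qform x ((1 - t) *\<^sub>R mat 1 + t *\<^sub>R A)) > 0" if "x \<noteq> 0" for x
  proof -
    from qform_id_pos[OF that] have a: "Re (qform x (mat 1)) > 0" "Im (qform x (mat 1)) = 0" by auto
    from assms(1) that have b: "Re (qform x A) > 0" "Im (qform x A) = 0" unfolding pos_def_def by auto
    have "(1 - t) * Re (qform x (mat 1)) + t * Re (qform x A) > 0"
    proof (cases "t = 1")
      case True thus ?thesis using b by simp
    next
      case False
      hence "(1 - t) * Re (qform x (mat 1)) > 0" using a assms by simp
      moreover have "t * Re (qform x A) \<ge> 0" using b assms by simp
      ultimately show ?thesis by linarith
    qed
    thus ?thesis using a b by (simp add: qform_add qform_scale)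
  qed
  ultimately show ?thesis unfolding pos_def_def by auto
qed

lemma det_scaleR: "det (c *\<^sub>R (A::complex^'n^'n)) = complex_of_real c ^ CARD('n) * det A"
  unfolding det_def
  by (simp add: sr prod.distrib sum_distrib_left algebra_simps)

lemma det_cnj: "det ((\<chi> i j. cnj (A$i$j)) :: complex^'n^'n) = cnj (det A)"
  unfolding det_def by (simp add: cnj_sum cnj_prod)

lemma herm_det_real: assumes "hermitian (A::complex^'n^'n)" shows "Im (det A) = 0"
proof -
  have "conj_transpose A = transpose ((\<chi> i j. cnj (A$i$j)) :: complex^'n^'n)"
    unfolding conj_transpose_def transpose_def by simp
  hence "det A = cnj (det A)"
    using assms unfolding hermitian_def by (metis det_transpose det_cnj)
  hence "Im (det A) = Im (cnj (det A))" by simp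
  thus ?thesis by simp
qed

lemma posdef_invertible: assumes "pos_def (A::complex^'n^'n)" shows "invertible A"
proof -
  have "x = 0" if "A *v x = 0" for x
  proof (rule ccontr)
    assume "x \<noteq> 0"
    hence "Re (qform x A) > 0" using assms unfolding pos_def_def by auto
    moreover have "qform x A = 0" unfolding qform_mv that by simp
    ultimately show False by simp
  qed
  thus ?thesis unfolding invertible_left_inverse matrix_left_invertible_ker by blast
qed

lemma cont_det_combo:
  "isCont (\<lambda>t. Re (det ((1 - t) *\<^sub>R mat 1 + t *\<^sub>R (A::complex^'n^'n)))) t"
proof -
  have "(\<lambda>t. Re (det ((1 - t) *\<^sub>R mat 1 + t *\<^sub>R A))) =
    (\<lambda>t. Re (\<Sum>p\<in>{p. p permutes (UNIV::'n set)}. of_int (sign p) *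
        (\<Prod>i\<in>UNIV. complex_of_real (1 - t) * (mat 1 :: complex^'n^'n) $ i $ p i
             + complex_of_real t * A $ i $ p i)))"
    unfolding det_def by (simp add: sr)
  moreover have "continuous_on UNIV (\<lambda>t. Re (\<Sum>p\<in>{p. p permutes (UNIV::'n set)}. of_int (sign p) *
        (\<Prod>i\<in>UNIV. complex_of_real (1 - t) * (mat 1 :: complex^'n^'n) $ i $ p i
             + complex_of_real t * A $ i $ p i)))"
    by (intro continuous_intros)
  ultimately show ?thesis using continuous_on_eq_continuous_at[of UNIV] by auto
qed

lemma posdef_det_pos: assumes "pos_def (A::complex^'n^'n)" shows "Re (det A) > 0"
proof (rule ccontr)
  let ?f = "\<lambda>t. Re (det ((1 - t) *\<^sub>R mat 1 + t *\<^sub>R A))"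
  assume "\<not> Re (det A) > 0"
  hence "?f 1 \<le> 0" by simp
  moreover have "0 \<le> ?f 0" by simp
  ultimately obtain t where t: "0 \<le> t" "t \<le> 1" "?f t = 0"
    using IVT2[of ?f 1 0 0] cont_det_combo by auto
  have pd: "pos_def ((1 - t) *\<^sub>R mat 1 + t *\<^sub>R A)" using pos_def_combo[OF assms t(1,2)] .
  hence "Im (det ((1 - t) *\<^sub>R mat 1 + t *\<^sub>R A)) = 0"
    using herm_det_real unfolding pos_def_def by blast
  with t(3) have "det ((1 - t) *\<^sub>R mat 1 + t *\<^sub>R A) = 0" by (simp add: complex_eq_iff)
  moreover have "det ((1 - t) *\<^sub>R mat 1 + t *\<^sub>R A) \<noteq> 0"
    using posdef_invertible[OF pd] invertible_det_nz by blast
  ultimately show False by simp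
qed

lemma inv_props: assumes "invertible A"
  shows "A ** matrix_inv A = mat 1" "matrix_inv A ** A = mat 1"
  using someI_ex[OF assms[unfolded invertible_def]] unfolding matrix_inv_def by auto

lemma mult_scaleR: "(a *\<^sub>R (A::complex^'n^'n)) ** (b *\<^sub>R B) = (a * b) *\<^sub>R (A ** B)"
  by (simp add: matrix_matrix_mult_def vec_eq_iff sr sum_distrib_left algebra_simps)

lemma inv_scale:
  assumes "invertible (A::complex^'n^'n)" "c \<noteq> 0"
  shows "matrix_inv (c *\<^sub>R A) = (1/c) *\<^sub>R matrix_inv A"
proof -
  let ?B = "(1/c) *\<^sub>R matrix_inv A"
  have r: "(c *\<^sub>R A) ** ?B = mat 1" using assms inv_props(1)[OF assms(1)] by (simp add: mult_scaleR)
  have "?B ** (c *\<^sub>R A) = ((1/c) * c) *\<^sub>R (matrix_inv A ** A)" by (rule mult_scaleR)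
  hence l: "?B ** (c *\<^sub>R A) = mat 1"
    using assms inv_props(2)[OF assms(1)] by simp
  have inv: "invertible (c *\<^sub>R A)" unfolding invertible_def using r l by blast
  let ?B' = "matrix_inv (c *\<^sub>R A)"
  have "?B' = ?B' ** ((c *\<^sub>R A) ** ?B)" using r by (simp add: matrix_mul_rid)
  also have "\<dots> = (?B' ** (c *\<^sub>R A)) ** ?B" by (simp add: matrix_mul_assoc)
  also have "\<dots> = ?B" using inv_props(2)[OF inv] by (simp add: matrix_mul_lid)
  finally show ?thesis .
qed

lemma qform_inv_nonneg:
  assumes "pos_def (R::complex^'n^'n)"
  shows "Re (qform v (matrix_inv R)) \<ge> 0" "v \<noteq> 0 \<Longrightarrow> Re (qform v (matrix_inv R)) > 0"
proof -
  have inv: "invertible R" using posdef_invertible[OF assms] .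
  define z where "z = matrix_inv R *v v"
  have Rz: "R *v z = v" unfolding z_def
    by (simp add: matrix_vector_mul_assoc inv_props(1)[OF inv])
  have "qform z R = cnj (qform v (matrix_inv R))"
    unfolding qform_mv Rz z_def[symmetric] by (simp add: cnj_sum mult.commute)
  hence e: "Re (qform v (matrix_inv R)) = Re (qform z R)" by simp
  show "v \<noteq> 0 \<Longrightarrow> Re (qform v (matrix_inv R)) > 0"
  proof -
    assume "v \<noteq> 0"
    hence "z \<noteq> 0" using Rz by auto
    thus ?thesis using e assms unfolding pos_def_def by auto
  qed
  show "Re (qform v (matrix_inv R)) \<ge> 0"
  proof (cases "v = 0")
    case True thus ?thesis by (simp add: qform_def)
  next
    case False thus ?thesis using \<open>v \<noteq> 0 \<Longrightarrow> _\<close> by (simp add: less_imp_le)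
  qed
qed

lemma P2_con_pos:
  assumes "\<exists>i<n. y i \<noteq> 0" "pos_def R" shows "P2_con n y R > 0"
proof -
  from assms(1) obtain k where k: "k < n" "y k \<noteq> 0" by auto
  have "(\<Sum>i<n. Re (qform (y i) (matrix_inv R))) > 0"
    by (rule sum_pos2[of _ k]) (use k qform_inv_nonneg[OF assms(2)] in auto)
  moreover have "n > 0" using k by simp
  ultimately show ?thesis unfolding P2_con_def by simp
qed

lemma P2_con_scale:
  assumes "pos_def R" "c > 0" shows "P2_con n y (c *\<^sub>R R) = P2_con n y R / c"
proof -
  have "matrix_inv (c *\<^sub>R R) = (1/c) *\<^sub>R matrix_inv R"
    using inv_scale[OF posdef_invertible[OF assms(1)]] assms(2) by simp
  thus ?thesis unfolding P2_con_def using assms(2)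
    by (simp add: qform_scale sum_divide_distrib mult.commute)
qed

lemma P2_obj_scale:
  assumes "pos_def (R::complex^'m^'m)" "c > 0"
  shows "P2_obj (c *\<^sub>R R) = real CARD('m) * ln c + P2_obj R"
proof -
  have "Re (det (c *\<^sub>R R)) = c ^ CARD('m) * Re (det R)"
    unfolding det_scaleR by (simp flip: of_real_power)
  thus ?thesis unfolding P2_obj_def using posdef_det_pos[OF assms(1)] assms(2)
    by (simp add: ln_mult ln_realpow)
qed

lemma P1_split: "P1_obj n y R = P2_con n y R + P2_obj R"
  unfolding P1_obj_def P2_con_def P2_obj_def by simp

lemma cone_scale: "cone T \<Longrightarrow> R \<in> T \<Longrightarrow> c > 0 \<Longrightarrow> c *\<^sub>R R \<in> T"
  unfolding cone_def by auto

lemma key_ineq: "0 < c \<Longrightarrow> 0 < (m::real) \<Longrightarrow> m - m * ln m \<le> c - m * ln c"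
proof -
  assume "0 < c" "0 < m"
  hence "ln (c/m) \<le> c/m - 1" by (simp add: ln_le_minus_one)
  hence "m * ln (c/m) \<le> m * (c/m - 1)" using \<open>0<m\<close> by (simp add: mult_left_mono)
  thus ?thesis using \<open>0<c\<close> \<open>0<m\<close> by (simp add: ln_div algebra_simps)
qed

theorem lemma1:
  fixes T :: "(complex^'m^'m) set" and n :: nat and y :: "nat \<Rightarrow> complex^'m"
  assumes not_all_zero: "\<exists>i<n. y i \<noteq> 0"
    and T_closed: "closed T"
    and T_cone: "cone T"
    and T_herm: "\<forall>A\<in>T. hermitian A"
  shows "(\<forall>X. is_min_P2 T n y X \<longrightarrow> is_min_P1 T n y ((1 / real CARD('m)) *\<^sub>R X))
       \<and> (\<forall>R. is_min_P1 T n y R \<longrightarrow> is_min_P2 T n y (real CARD('m) *\<^sub>R R))"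
proof (intro conjI allI impI)
  define m where "m = real CARD('m)"
  have m0: "m > 0" unfolding m_def by simp
  {
    fix X assume X: "is_min_P2 T n y X"
    hence XT: "X \<in> T" and Xpd: "pos_def X" and Xc: "P2_con n y X \<le> 1"
      and Xmin: "\<And>X'. X' \<in> T \<Longrightarrow> pos_def X' \<Longrightarrow> P2_con n y X' \<le> 1 \<Longrightarrow> P2_obj X \<le> P2_obj X'"
      unfolding is_min_P2_def by auto
    define a where "a = P2_con n y X"
    have a0: "a > 0" unfolding a_def using P2_con_pos[OF not_all_zero Xpd] .
    have a1: "a = 1"
    proof (rule ccontr)
      assume "a \<noteq> 1" hence "a < 1" using Xc a_def by simp
      have "P2_obj X \<le> P2_obj (a *\<^sub>R X)"
        apply (rule Xmin)
        using cone_scale[OF T_cone XT a0] pos_def_scale[OF Xpd a0] P2_con_scale[OF Xpd a0] a0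
        by (auto simp: a_def)
      hence "0 \<le> m * ln a" using P2_obj_scale[OF Xpd a0] by (simp add: m_def)
      moreover have "ln a < 0" using \<open>a < 1\<close> a0 by simp
      ultimately show False using m0 by (simp add: mult_less_0_iff zero_le_mult_iff)
    qed
    have im0: "1/m > 0" using m0 by simp
    show "is_min_P1 T n y ((1 / real CARD('m)) *\<^sub>R X)"
      unfolding is_min_P1_def m_def[symmetric]
    proof (intro conjI ballI impI)
      show "(1/m) *\<^sub>R X \<in> T" using cone_scale[OF T_cone XT im0] .
      show "pos_def ((1/m) *\<^sub>R X)" using pos_def_scale[OF Xpd im0] .
      fix R' assume R'T: "R' \<in> T" and R'pd: "pos_def R'"
      define c where "c = P2_con n y R'"
      have c0: "c > 0" unfolding c_def using P2_con_pos[OF not_all_zero R'pd] .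
      have "P2_obj X \<le> P2_obj (c *\<^sub>R R')"
        apply (rule Xmin)
        using cone_scale[OF T_cone R'T c0] pos_def_scale[OF R'pd c0] P2_con_scale[OF R'pd c0] c0
        by (auto simp: c_def)
      hence h: "P2_obj X \<le> m * ln c + P2_obj R'" using P2_obj_scale[OF R'pd c0] by (simp add: m_def)
      have "P1_obj n y ((1/m) *\<^sub>R X) = m + m * ln (1/m) + P2_obj X"
        unfolding P1_split P2_con_scale[OF Xpd im0] P2_obj_scale[OF Xpd im0]
        using a1 a_def by (simp add: m_def)
      also have "\<dots> = m - m * ln m + P2_obj X" using m0 by (simp add: ln_div)
      also have "\<dots> \<le> c - m * ln c + P2_obj X" using key_ineq[OF c0 m0] by simp
      also have "\<dots> \<le> P1_obj n y R'" unfolding P1_split c_def[symmetric] using h by simp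
      finally show "P1_obj n y ((1/m) *\<^sub>R X) \<le> P1_obj n y R'" .
    qed
  }
  {
    fix R assume R: "is_min_P1 T n y R"
    hence RT: "R \<in> T" and Rpd: "pos_def R"
      and Rmin: "\<And>R'. R' \<in> T \<Longrightarrow> pos_def R' \<Longrightarrow> P1_obj n y R \<le> P1_obj n y R'"
      unfolding is_min_P1_def by auto
    define c where "c = P2_con n y R"
    have c0: "c > 0" unfolding c_def using P2_con_pos[OF not_all_zero Rpd] .
    define s where "s = c / m"
    have s0: "s > 0" using c0 m0 by (simp add: s_def)
    have "P1_obj n y R \<le> P1_obj n y (s *\<^sub>R R)"
      using Rmin cone_scale[OF T_cone RT s0] pos_def_scale[OF Rpd s0] by auto
    hence "c + P2_obj R \<le> c / s + m * ln s + P2_obj R"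
      unfolding P1_split P2_con_scale[OF Rpd s0] P2_obj_scale[OF Rpd s0] by (simp add: c_def m_def)
    hence "c \<le> m + m * ln s" using m0 c0 by (simp add: s_def)
    hence "s - 1 \<le> ln s" using m0 by (simp add: s_def field_simps)
    hence "ln s = s - 1" using ln_le_minus_one[OF s0] by simp
    hence s1: "s = 1" using ln_eq_minus_one[OF s0] by simp
    hence cm: "c = m" using m0 by (simp add: s_def)
    show "is_min_P2 T n y (real CARD('m) *\<^sub>R R)"
      unfolding is_min_P2_def m_def[symmetric]
    proof (intro conjI ballI impI)
      show "m *\<^sub>R R \<in> T" using cone_scale[OF T_cone RT m0] .
      show "pos_def (m *\<^sub>R R)" using pos_def_scale[OF Rpd m0] .
      show "P2_con n y (m *\<^sub>R R) \<le> 1" unfolding P2_con_scale[OF Rpd m0] c_def[symmetric] cm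
        using m0 by simp
      fix X' assume X'T: "X' \<in> T" and X'pd: "pos_def X'" and X'c: "P2_con n y X' \<le> 1"
      define d where "d = P2_con n y X'"
      have im0: "1/m > 0" using m0 by simp
      have "P1_obj n y R \<le> P1_obj n y ((1/m) *\<^sub>R X')"
        using Rmin cone_scale[OF T_cone X'T im0] pos_def_scale[OF X'pd im0] by auto
      hence "c + P2_obj R \<le> m * d + m * ln (1/m) + P2_obj X'"
        unfolding P1_split P2_con_scale[OF X'pd im0] P2_obj_scale[OF X'pd im0]
        by (simp add: c_def d_def m_def mult.commute)
      hence "m + P2_obj R \<le> m * d - m * ln m + P2_obj X'" using cm m0 by (simp add: ln_div)
      moreover have "m * d \<le> m" using X'c m0 d_def by simp
      moreover have "P2_obj (m *\<^sub>R R) = m * ln m + P2_obj R"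
        using P2_obj_scale[OF Rpd m0] by (simp add: m_def)
      ultimately show "P2_obj (m *\<^sub>R R) \<le> P2_obj X'" by linarith
    qed
  }
qed

end
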